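(* Consider the following algorithm. (1) Let $S_L$ be the welfare $W$ of the allocation obtained by ranking ads by the scores $b_i q_i$. (2) Let $S_H = \sum_{j=1}^s n_j b_{(j)} q_{(j)}$ for that same allocation. (3) Compute the allocations obtained by ranking ads by the scores $b_i q_i - \lambda q_i S$ for $S=S_L$ and for $S=S_H$. (4) If these two allocations coincide, output it. (5) Otherwise let $\hat S = \frac12(S_L+S_H)$ and compute the allocation obtained by ranking by scores $b_i q_i - \lambda q_i \hat S$. (6) Let $\phi(\hat S) = \sum_{j=1}^s n_j (b_{(j)} q_{(j)} - \lambda q_{(j)} \hat S)$ for this allocation; if $\phi(\hat S) < \hat S$ set $S_H=\hat S$, otherwise set $S_L=\hat S$. (7) Repeat steps (3)–(6) until the allocations in step (4) coincide, and output the resulting allocation. Then the allocation output by this algorithm is an efficiency-maximizing allocation, i.e., it maximizes $W$ over all allocations.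
   Context: There are $s$ positions with quality scores $n_1 \ge \dots \ge n_s \ge 0$ and a set of advertisers, advertiser $i$ having quality score $q_i \ge 0$ and bid $b_i$. An allocation places distinct advertisers in positions $1,\dots,s$; write $q_{(j)}, b_{(j)}$ for the quality and bid of the ad in position $j$. Fix $\lambda>0$. The (expected social) welfare of an allocation is $W = \frac{\sum_{j=1}^s n_j b_{(j)} q_{(j)}}{1+\lambda\sum_{j=1}^s n_j q_{(j)}}$ (this corresponds to predicted click-through rates $p_j = \nu n_j q_{(j)}/(1+\lambda\sum_\ell n_\ell q_{(\ell)})$ with $\nu=1$). "Ranking ads by scores $x_i$" means sorting the advertisers in decreasing order of $x_i$ and placing the $j$-th in position $j$ for $j=1,\dots,s$. *)

theory Defs
  imports Main "HOL.Real"
begin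

(* Advertisers form a finite set A; positions are 1..s with position qualities n j.
   An allocation is a map sigma from positions {1..s} to distinct advertisers in A. *)

definition is_allocation :: "'a set \<Rightarrow> nat \<Rightarrow> (nat \<Rightarrow> 'a) \<Rightarrow> bool" where
  "is_allocation A s \<sigma> \<longleftrightarrow> inj_on \<sigma> {1..s} \<and> \<sigma> ` {1..s} \<subseteq> A"

definition welfare ::
  "nat \<Rightarrow> (nat \<Rightarrow> real) \<Rightarrow> ('a \<Rightarrow> real) \<Rightarrow> ('a \<Rightarrow> real) \<Rightarrow> real \<Rightarrow> (nat \<Rightarrow> 'a) \<Rightarrow> real" where
  "welfare s n q b lam \<sigma> =
     (\<Sum>j\<in>{1..s}. n j * b (\<sigma> j) * q (\<sigma> j)) / (1 + lam * (\<Sum>j\<in>{1..s}. n j * q (\<sigma> j)))"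

definition value_sum ::
  "nat \<Rightarrow> (nat \<Rightarrow> real) \<Rightarrow> ('a \<Rightarrow> real) \<Rightarrow> ('a \<Rightarrow> real) \<Rightarrow> (nat \<Rightarrow> 'a) \<Rightarrow> real" where
  "value_sum s n q b \<sigma> = (\<Sum>j\<in>{1..s}. n j * b (\<sigma> j) * q (\<sigma> j))"

(* sigma is an allocation obtained by ranking the advertisers by scores x:
   sorting them in decreasing order of x (ties broken arbitrarily) and placing
   the j-th one in position j, for j = 1..s. *)
definition is_ranking :: "'a set \<Rightarrow> nat \<Rightarrow> ('a \<Rightarrow> real) \<Rightarrow> (nat \<Rightarrow> 'a) \<Rightarrow> bool" where
  "is_ranking A s x \<sigma> \<longleftrightarrow> is_allocation A s \<sigma>
     \<and> (\<forall>j\<in>{1..s}. \<forall>k\<in>{1..s}. j < k \<longrightarrow> x (\<sigma> k) \<le> x (\<sigma> j))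
     \<and> (\<forall>i\<in>A - \<sigma> ` {1..s}. \<forall>j\<in>{1..s}. x i \<le> x (\<sigma> j))"

definition adj_score :: "('a \<Rightarrow> real) \<Rightarrow> ('a \<Rightarrow> real) \<Rightarrow> real \<Rightarrow> real \<Rightarrow> 'a \<Rightarrow> real" where
  "adj_score q b lam S i = b i * q i - lam * q i * S"

definition phi_val ::
  "nat \<Rightarrow> (nat \<Rightarrow> real) \<Rightarrow> ('a \<Rightarrow> real) \<Rightarrow> ('a \<Rightarrow> real) \<Rightarrow> real \<Rightarrow> real \<Rightarrow> (nat \<Rightarrow> 'a) \<Rightarrow> real" where
  "phi_val s n q b lam S \<sigma> = (\<Sum>j\<in>{1..s}. n j * (b (\<sigma> j) * q (\<sigma> j) - lam * q (\<sigma> j) * S))"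

(* SL SH out : starting the loop (steps 3-7) with current values
   SL, SH, some run of the algorithm terminates and outputs out.
   Ties in the rankings may be broken arbitrarily (every tie-breaking is allowed). *)
inductive bisect_loop for A s n q b lam where
  stop: "\<lbrakk> is_ranking A s (adj_score q b lam SL) \<sigma>L;
           is_ranking A s (adj_score q b lam SH) \<sigma>H;
           \<forall>j\<in>{1..s}. \<sigma>L j = \<sigma>H j \<rbrakk>
         \<Longrightarrow> bisect_loop A s n q b lam SL SH \<sigma>L"
| step: "\<lbrakk> is_ranking A s (adj_score q b lam SL) \<sigma>L;
           is_ranking A s (adj_score q b lam SH) \<sigma>H;
           \<not> (\<forall>j\<in>{1..s}. \<sigma>L j = \<sigma>H j);
           Sh = (SL + SH) / 2;
           is_ranking A s (adj_score q b lam Sh) \<tau>;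
           if phi_val s n q b lam Sh \<tau> < Sh
             then bisect_loop A s n q b lam SL Sh out
             else bisect_loop A s n q b lam Sh SH out \<rbrakk>
         \<Longrightarrow> bisect_loop A s n q b lam SL SH out"

definition algorithm_output ::
  "'a set \<Rightarrow> nat \<Rightarrow> (nat \<Rightarrow> real) \<Rightarrow> ('a \<Rightarrow> real) \<Rightarrow> ('a \<Rightarrow> real) \<Rightarrow> real \<Rightarrow> (nat \<Rightarrow> 'a) \<Rightarrow> bool" where
  "algorithm_output A s n q b lam out \<longleftrightarrow>
     (\<exists>\<sigma>0. is_ranking A s (\<lambda>i. b i * q i) \<sigma>0
        \<and> bisect_loop A s n q b lam (welfare s n q b lam \<sigma>0) (value_sum s n q b \<sigma>0) out)"

end

theory Submission
  imports Defs
begin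

lemma abel:
  fixes d n :: "nat \<Rightarrow> real"
  assumes D: "\<forall>k\<in>{1..s}. 0 \<le> (\<Sum>j=1..k. d j)"
    and N: "\<forall>j\<in>{1..s}. \<forall>k\<in>{1..s}. j \<le> k \<longrightarrow> n k \<le> n j"
  shows "m \<le> s \<Longrightarrow> n m * (\<Sum>j=1..m. d j) \<le> (\<Sum>j=1..m. n j * d j)"
proof (induction m)
  case 0
  then show ?case by simp
next
  case (Suc m)
  have ih: "n m * (\<Sum>j=1..m. d j) \<le> (\<Sum>j=1..m. n j * d j)" using Suc by simp
  have "n (Suc m) * (\<Sum>j=1..m. d j) \<le> n m * (\<Sum>j=1..m. d j)"
  proof (cases "m = 0")
    case True then show ?thesis by simp
  next
    case False
    have "0 \<le> (\<Sum>j=1..m. d j)" using D Suc.prems False by auto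
    moreover have "n (Suc m) \<le> n m" using N Suc.prems False by auto
    ultimately show ?thesis by (simp add: mult_right_mono)
  qed
  then show ?case using ih by (simp add: distrib_left)
qed

lemma set_sum_le:
  fixes x :: "'a \<Rightarrow> real"
  assumes "finite T" "finite U" "card T = card U"
    and "\<forall>t\<in>T-U. \<forall>u\<in>U-T. x t \<le> x u"
  shows "sum x T \<le> sum x U"
proof -
  have cT: "card (T-U) = card (U-T)"
    using assms(1-3) by (metis Int_commute card_Diff_subset_Int finite_Int)
  obtain f where f: "bij_betw f (T-U) (U-T)"
    using finite_same_card_bij[OF _ _ cT] assms by auto
  have "sum x (T-U) \<le> sum (x \<circ> f) (T-U)"
    apply (rule sum_mono) using assms(4) f by (auto simp: bij_betw_def)
  also have "\<dots> = sum x (U-T)" using sum.reindex_bij_betw[OF f, of x] by simp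
  finally have "sum x (T-U) \<le> sum x (U-T)" .
  moreover have "sum x T = sum x (T\<inter>U) + sum x (T-U)"
    using assms(1) by (metis add.commute sum.Int_Diff)
  moreover have "sum x U = sum x (T\<inter>U) + sum x (U-T)"
    using assms(2) by (metis Int_commute add.commute sum.Int_Diff)
  ultimately show ?thesis by linarith
qed

lemma partial_le:
  fixes x :: "'a \<Rightarrow> real"
  assumes fin: "finite A" and r: "is_ranking A s x \<sigma>" and p: "is_allocation A s \<pi>"
    and k: "k \<le> s"
  shows "(\<Sum>j=1..k. x (\<pi> j)) \<le> (\<Sum>j=1..k. x (\<sigma> j))"
proof -
  have ia: "inj_on \<sigma> {1..s}" "\<sigma> ` {1..s} \<subseteq> A" "inj_on \<pi> {1..s}" "\<pi> ` {1..s} \<subseteq> A"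
    using r p unfolding is_ranking_def is_allocation_def by blast+
  have sub: "{1..k} \<subseteq> {1..s}" using k by auto
  have is1: "inj_on \<sigma> {1..k}" "inj_on \<pi> {1..k}" using inj_on_subset[OF ia(1) sub] inj_on_subset[OF ia(3) sub] by auto
  have e1: "(\<Sum>j=1..k. x (\<pi> j)) = sum x (\<pi> ` {1..k})" unfolding sum.reindex[OF is1(2)] by simp
  have e2: "(\<Sum>j=1..k. x (\<sigma> j)) = sum x (\<sigma> ` {1..k})" unfolding sum.reindex[OF is1(1)] by simp
  have "sum x (\<pi> ` {1..k}) \<le> sum x (\<sigma> ` {1..k})"
  proof (rule set_sum_le)
    show "card (\<pi> ` {1..k}) = card (\<sigma> ` {1..k})" using card_image[OF is1(1)] card_image[OF is1(2)] by simp
    show "\<forall>t\<in>\<pi> ` {1..k} - \<sigma> ` {1..k}. \<forall>u\<in>\<sigma> ` {1..k} - \<pi> ` {1..k}. x t \<le> x u"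
    proof (intro ballI)
      fix t u assume t: "t \<in> \<pi> ` {1..k} - \<sigma> ` {1..k}" and u: "u \<in> \<sigma> ` {1..k} - \<pi> ` {1..k}"
      obtain j where j: "j \<in> {1..k}" "u = \<sigma> j" using u by auto
      have tA: "t \<in> A" using t ia sub by auto
      show "x t \<le> x u"
      proof (cases "t \<in> \<sigma> ` {1..s}")
        case True
        then obtain m where m: "m \<in> {1..s}" "t = \<sigma> m" by auto
        have "m > k"
        proof (rule ccontr)
          assume "\<not> m > k"
          then have "m \<in> {1..k}" using m by auto
          then show False using m t by blast
        qed
        have ord: "\<forall>j\<in>{1..s}. \<forall>k\<in>{1..s}. j < k \<longrightarrow> x (\<sigma> k) \<le> x (\<sigma> j)"
          using r unfolding is_ranking_def by blast
        have "j \<in> {1..s}" "j < m" using j k \<open>m > k\<close> by auto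
        then show ?thesis using ord m j by simp
      next
        case False
        have out: "\<forall>i\<in>A - \<sigma> ` {1..s}. \<forall>j\<in>{1..s}. x i \<le> x (\<sigma> j)"
          using r unfolding is_ranking_def by blast
        have "j \<in> {1..s}" using j k by auto
        then show ?thesis using out False tA j by simp
      qed
    qed
  qed auto
  then show ?thesis using e1 e2 by simp
qed

lemma rearr:
  fixes x :: "'a \<Rightarrow> real" and n :: "nat \<Rightarrow> real"
  assumes fin: "finite A" and r: "is_ranking A s x \<sigma>" and p: "is_allocation A s \<pi>"
    and N: "\<forall>j\<in>{1..s}. \<forall>k\<in>{1..s}. j \<le> k \<longrightarrow> n k \<le> n j"
    and N0: "\<forall>j\<in>{1..s}. n j \<ge> 0"
  shows "(\<Sum>j=1..s. n j * x (\<pi> j)) \<le> (\<Sum>j=1..s. n j * x (\<sigma> j))"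
proof -
  define d where "d j = x (\<sigma> j) - x (\<pi> j)" for j
  have D: "\<forall>k\<in>{1..s}. 0 \<le> (\<Sum>j=1..k. d j)"
    using partial_le[OF fin r p] by (auto simp: d_def sum_subtractf)
  have a: "n s * (\<Sum>j=1..s. d j) \<le> (\<Sum>j=1..s. n j * d j)" using abel[OF D N] by simp
  have "0 \<le> n s * (\<Sum>j=1..s. d j)"
  proof (cases "s = 0")
    case False then show ?thesis using D N0 by auto
  qed simp
  then have "0 \<le> (\<Sum>j=1..s. n j * d j)" using a by linarith
  then show ?thesis by (simp add: d_def right_diff_distrib sum_subtractf)
qed


lemma lin_between:
  fixes a c SL SH S :: real
  assumes "0 \<le> a - SL*c" "0 \<le> a - SH*c" "SL \<le> S" "S \<le> SH"
  shows "0 \<le> a - S*c"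
proof (cases "c \<ge> 0")
  case True
  then have "S*c \<le> SH*c" using assms by (simp add: mult_right_mono)
  then show ?thesis using assms by linarith
next
  case False
  then have "S*c \<le> SL*c" using assms by (simp add: mult_right_mono_neg)
  then show ?thesis using assms by linarith
qed

locale auct =
  fixes A :: "'a set" and s :: nat and n :: "nat \<Rightarrow> real"
    and q b :: "'a \<Rightarrow> real" and lam :: real
  assumes fin: "finite A"
    and lam: "lam > 0"
    and N: "\<forall>j\<in>{1..s}. \<forall>k\<in>{1..s}. j \<le> k \<longrightarrow> n k \<le> n j"
    and N0: "\<forall>j\<in>{1..s}. n j \<ge> 0"
    and Q0: "\<forall>i\<in>A. q i \<ge> 0"
    and B0: "\<forall>i\<in>A. b i \<ge> 0"
begin

definition Qs where "Qs \<pi> = (\<Sum>j\<in>{1..s}. n j * q (\<pi> j))"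

lemma phi_eq: "phi_val s n q b lam S \<pi> = value_sum s n q b \<pi> - lam * S * Qs \<pi>"
  by (simp add: phi_val_def value_sum_def Qs_def right_diff_distrib sum_subtractf
      sum_distrib_left mult_ac)

lemma Qs_nonneg: assumes "is_allocation A s \<pi>" shows "0 \<le> Qs \<pi>"
  unfolding Qs_def
proof (rule sum_nonneg)
  fix j assume j: "j \<in> {1..s}"
  then have "\<pi> j \<in> A" using assms unfolding is_allocation_def by blast
  then show "0 \<le> n j * q (\<pi> j)" using N0 Q0 j by simp
qed

lemma V_nonneg: assumes "is_allocation A s \<pi>" shows "0 \<le> value_sum s n q b \<pi>"
  unfolding value_sum_def
proof (rule sum_nonneg)
  fix j assume j: "j \<in> {1..s}"
  then have "\<pi> j \<in> A" using assms unfolding is_allocation_def by blast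
  then show "0 \<le> n j * b (\<pi> j) * q (\<pi> j)" using N0 Q0 B0 j by simp
qed

lemma W_eq: "welfare s n q b lam \<pi> = value_sum s n q b \<pi> / (1 + lam * Qs \<pi>)"
  by (simp add: welfare_def value_sum_def Qs_def)

lemma W_ge: assumes "is_allocation A s \<pi>"
  shows "(S \<le> welfare s n q b lam \<pi>) \<longleftrightarrow> (S \<le> phi_val s n q b lam S \<pi>)"
proof -
  have pos: "0 < 1 + lam * Qs \<pi>" using Qs_nonneg[OF assms] lam
    by (simp add: add_pos_nonneg)
  have "(S \<le> welfare s n q b lam \<pi>) \<longleftrightarrow> S * (1 + lam * Qs \<pi>) \<le> value_sum s n q b \<pi>"
    unfolding W_eq using pos by (simp add: le_divide_eq)
  also have "\<dots> \<longleftrightarrow> (S \<le> phi_val s n q b lam S \<pi>)"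
    unfolding phi_eq by (simp add: algebra_simps)
  finally show ?thesis .
qed

lemma W_le_V: assumes "is_allocation A s \<pi>"
  shows "welfare s n q b lam \<pi> \<le> value_sum s n q b \<pi>"
proof -
  have "1 \<le> 1 + lam * Qs \<pi>" using Qs_nonneg[OF assms] lam by simp
  then show ?thesis unfolding W_eq using V_nonneg[OF assms]
    by (simp add: divide_le_eq mult_le_cancel_left1 mult.commute)
qed

lemma phi_max:
  assumes "is_ranking A s (adj_score q b lam S) \<sigma>" "is_allocation A s \<pi>"
  shows "phi_val s n q b lam S \<pi> \<le> phi_val s n q b lam S \<sigma>"
  using rearr[OF fin assms N N0] by (simp add: phi_val_def adj_score_def)

lemma V_max:
  assumes "is_ranking A s (\<lambda>i. b i * q i) \<sigma>" "is_allocation A s \<pi>"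
  shows "value_sum s n q b \<pi> \<le> value_sum s n q b \<sigma>"
  using rearr[OF fin assms N N0] by (simp add: value_sum_def mult_ac)

lemma ranking_alloc: "is_ranking A s x \<sigma> \<Longrightarrow> is_allocation A s \<sigma>"
  by (simp add: is_ranking_def)

lemma loop:
  assumes "bisect_loop A s n q b lam SL SH out"
  shows "(\<forall>\<pi>. is_allocation A s \<pi> \<longrightarrow> welfare s n q b lam \<pi> \<le> SH) \<longrightarrow>
    (\<exists>\<rho>. is_allocation A s \<rho> \<and> SL \<le> welfare s n q b lam \<rho>) \<longrightarrow>
    is_allocation A s out \<and> (\<forall>\<pi>. is_allocation A s \<pi> \<longrightarrow> welfare s n q b lam \<pi> \<le> welfare s n q b lam out)"
  using assms
proof (induction rule: bisect_loop.induct)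
  case (stop SL \<sigma>L SH \<sigma>H)
  show ?case
  proof (intro impI)
  assume I1: "\<forall>\<pi>. is_allocation A s \<pi> \<longrightarrow> welfare s n q b lam \<pi> \<le> SH"
    and I2: "\<exists>\<rho>. is_allocation A s \<rho> \<and> SL \<le> welfare s n q b lam \<rho>"
  have aL: "is_allocation A s \<sigma>L" using stop ranking_alloc by blast
  have phiH: "phi_val s n q b lam S \<sigma>H = phi_val s n q b lam S \<sigma>L" for S
    unfolding phi_val_def using stop(3) by (intro sum.cong) auto
  obtain \<rho> where \<rho>: "is_allocation A s \<rho>" "SL \<le> welfare s n q b lam \<rho>" using I2 by blast
  have "welfare s n q b lam \<pi> \<le> welfare s n q b lam \<sigma>L" if \<pi>: "is_allocation A s \<pi>" for \<pi>
  proof (cases "welfare s n q b lam \<pi> \<le> SL")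
    case True
    have "SL \<le> phi_val s n q b lam SL \<rho>" using W_ge \<rho> by blast
    also have "\<dots> \<le> phi_val s n q b lam SL \<sigma>L" using phi_max stop(1) \<rho> by blast
    finally have "SL \<le> welfare s n q b lam \<sigma>L" using W_ge aL by blast
    then show ?thesis using True by linarith
  next
    case False
    define w where "w = welfare s n q b lam \<pi>"
    have wH: "w \<le> SH" using I1 \<pi> w_def by blast
    have e1: "0 \<le> phi_val s n q b lam SL \<sigma>L - phi_val s n q b lam SL \<pi>"
      using phi_max stop(1) \<pi> by fastforce
    have e2: "0 \<le> phi_val s n q b lam SH \<sigma>L - phi_val s n q b lam SH \<pi>"
      using phi_max[OF stop(2) \<pi>] phiH by simp
    have "0 \<le> (value_sum s n q b \<sigma>L - value_sum s n q b \<pi>) - w * (lam * (Qs \<sigma>L - Qs \<pi>))"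
      apply (rule lin_between[of _ SL _ SH])
      using e1 e2 False wH w_def by (auto simp: phi_eq algebra_simps)
    then have "phi_val s n q b lam w \<pi> \<le> phi_val s n q b lam w \<sigma>L"
      by (simp add: phi_eq algebra_simps)
    moreover have "w \<le> phi_val s n q b lam w \<pi>" using W_ge \<pi> w_def by blast
    ultimately have "w \<le> phi_val s n q b lam w \<sigma>L" by linarith
    then show ?thesis using W_ge aL w_def by blast
  qed
  then show "is_allocation A s \<sigma>L \<and> (\<forall>\<pi>. is_allocation A s \<pi> \<longrightarrow> welfare s n q b lam \<pi> \<le> welfare s n q b lam \<sigma>L)" using aL by blast
  qed
next
  case (step SL \<sigma>L SH \<sigma>H Sh \<tau> out)
  have a\<tau>: "is_allocation A s \<tau>" using step ranking_alloc by blast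
  show ?case
  proof (intro impI)
  assume I1: "\<forall>\<pi>. is_allocation A s \<pi> \<longrightarrow> welfare s n q b lam \<pi> \<le> SH"
    and I2: "\<exists>\<rho>. is_allocation A s \<rho> \<and> SL \<le> welfare s n q b lam \<rho>"
  show "is_allocation A s out \<and> (\<forall>\<pi>. is_allocation A s \<pi> \<longrightarrow> welfare s n q b lam \<pi> \<le> welfare s n q b lam out)"
  proof (cases "phi_val s n q b lam Sh \<tau> < Sh")
    case True
    have "welfare s n q b lam \<pi> \<le> Sh" if \<pi>: "is_allocation A s \<pi>" for \<pi>
    proof (rule ccontr)
      assume "\<not> ?thesis"
      then have "Sh \<le> welfare s n q b lam \<pi>" by linarith
      then have "Sh \<le> phi_val s n q b lam Sh \<pi>" using W_ge[OF \<pi>] by blast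
      also have "\<dots> \<le> phi_val s n q b lam Sh \<tau>" using phi_max step(5) \<pi> by blast
      finally show False using True by linarith
    qed
    then have h1: "\<forall>\<pi>. is_allocation A s \<pi> \<longrightarrow> welfare s n q b lam \<pi> \<le> Sh" by blast
    have h2: "\<exists>\<rho>. is_allocation A s \<rho> \<and> SL \<le> welfare s n q b lam \<rho>" using I2 .
    from step(6) True have "bisect_loop A s n q b lam SL Sh out \<and>
      ((\<forall>\<pi>. is_allocation A s \<pi> \<longrightarrow> welfare s n q b lam \<pi> \<le> Sh) \<longrightarrow>
    (\<exists>\<rho>. is_allocation A s \<rho> \<and> SL \<le> welfare s n q b lam \<rho>) \<longrightarrow>
    is_allocation A s out \<and> (\<forall>\<pi>. is_allocation A s \<pi> \<longrightarrow> welfare s n q b lam \<pi> \<le> welfare s n q b lam out))"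
      by simp
    then show ?thesis using h1 h2 by blast
  next
    case False
    then have "Sh \<le> welfare s n q b lam \<tau>" using W_ge a\<tau> by auto
    then have h2: "\<exists>\<rho>. is_allocation A s \<rho> \<and> Sh \<le> welfare s n q b lam \<rho>" using a\<tau> by blast
    have h1: "\<forall>\<pi>. is_allocation A s \<pi> \<longrightarrow> welfare s n q b lam \<pi> \<le> SH" using I1 .
    from step(6) False have "bisect_loop A s n q b lam Sh SH out \<and>
      ((\<forall>\<pi>. is_allocation A s \<pi> \<longrightarrow> welfare s n q b lam \<pi> \<le> SH) \<longrightarrow>
    (\<exists>\<rho>. is_allocation A s \<rho> \<and> Sh \<le> welfare s n q b lam \<rho>) \<longrightarrow>
    is_allocation A s out \<and> (\<forall>\<pi>. is_allocation A s \<pi> \<longrightarrow> welfare s n q b lam \<pi> \<le> welfare s n q b lam out))"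
      by simp
    then show ?thesis using h1 h2 by blast
  qed
  qed
qed

end

theorem theorem3:
  fixes A :: "'a set" and s :: nat and n :: "nat \<Rightarrow> real"
    and q b :: "'a \<Rightarrow> real" and lam :: real and out :: "nat \<Rightarrow> 'a"
  assumes "finite A"
    and "lam > 0"
    and "\<forall>j\<in>{1..s}. \<forall>k\<in>{1..s}. j \<le> k \<longrightarrow> n k \<le> n j"
    and "\<forall>j\<in>{1..s}. n j \<ge> 0"
    and "\<forall>i\<in>A. q i \<ge> 0"
    and "\<forall>i\<in>A. b i \<ge> 0"
    and "algorithm_output A s n q b lam out"
  shows "is_allocation A s out
    \<and> (\<forall>\<sigma>. is_allocation A s \<sigma> \<longrightarrow> welfare s n q b lam \<sigma> \<le> welfare s n q b lam out)"
proof -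
  interpret auct A s n q b lam using assms(1-6) by unfold_locales
  obtain \<sigma>0 where s0: "is_ranking A s (\<lambda>i. b i * q i) \<sigma>0"
    "bisect_loop A s n q b lam (welfare s n q b lam \<sigma>0) (value_sum s n q b \<sigma>0) out"
    using assms(7) unfolding algorithm_output_def by blast
  have a0: "is_allocation A s \<sigma>0" using s0 ranking_alloc by blast
  have h1: "\<forall>\<pi>. is_allocation A s \<pi> \<longrightarrow> welfare s n q b lam \<pi> \<le> value_sum s n q b \<sigma>0"
    using W_le_V V_max s0(1) by (meson order_trans)
  have h2: "\<exists>\<rho>. is_allocation A s \<rho> \<and> welfare s n q b lam \<sigma>0 \<le> welfare s n q b lam \<rho>"
    using a0 by blast
  show ?thesis using loop[OF s0(2)] h1 h2 by blast
qed

end
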